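(* Let $T$ be a lifted graph, $F\colon T\to T$ a continuous sun-like map of degree 1, ${\cal P}$ a basic partition of $F$ and ${\cal G}$ its covering graph. If $\alpha\to\beta$ is an arrow in ${\cal G}$ and $A\in{\cal P}$ satisfies $\langle\alpha\rangle\subset A$, then $\langle\alpha\rangle$ positively $F$-covers $\langle\beta\rangle+p(A)$.
   Context: A lifted graph is a connected topological space $T$ with a homeomorphism $h\colon\mathbb R\to h(\mathbb R)\subset T$ and a homeomorphism $\tau\colon T\to T$ such that $\tau(h(x))=h(x+1)$, the closure of each connected component of $T\setminus h(\mathbb R)$ is a topological finite graph meeting $h(\mathbb R)$ in exactly one point, and only finitely many such components have closure meeting $h([0,1])$. Identify $h(\mathbb R)$ with $\mathbb R$, write $x+m:=\tau^m(x)$; $r_{\mathbb R}\colon T\to\mathbb R$ is the identity on $\mathbb R$ and maps a component $C$ of $T\setminus\mathbb R$ to the point $\overline C\cap\mathbb R$. $F$ has degree 1 if $F(x+1)=F(x)+1$. Let $T_{\mathbb R}:=\overline{\bigcup_{n\ge0}F^n(\mathbb R)}$, $X:=\overline{T\setminus T_{\mathbb R}}\cap r_{\mathbb R}^{-1}([0,1))$. $F$ is sun-like if $(T\setminus T_{\mathbb R})\cap r_{\mathbb R}^{-1}([0,1))$ consists of finitely many intervals with pairwise disjoint closures $X^i$, $i\in\Lambda$ (branches), each a compact interval meeting $T_{\mathbb R}$ in one endpoint $\min X^i$ (fixing the order of $X^i$). For $j\in\Lambda$, $r_j\colon T\to X^j$ is $r_j(x)=x$ for $x\in X^j$ and $r_j(x)=\min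 X^j$ otherwise. Positive covering: for nonempty compact intervals $I\subset X^i$, $J\subset X^j$, $n\ge1$ and $p\in\mathbb Z$, $I$ positively $F^n$-covers $J+p$ if there exist $x\le y$ in $I$ (order of $X^i$) with $r_j(F^n(x)-p)\le\min J$ and $\max J\le r_j(F^n(y)-p)$ (order of $X^j$). A basic partition is a finite family ${\cal P}=\{X^i_j\}$ of pairwise disjoint nonempty compact intervals $X^i_1<\dots<X^i_{N_i}$ in $X^i$, with $\ell(X^i_j)\in\Lambda$, $p(X^i_j)\in\mathbb Z$, such that $F(X^i_j)\subset(X^{\ell(X^i_j)}+p(X^i_j))\cup\mathrm{Int}(T_{\mathbb R})$, $F(\min X^i_j)=\min X^{\ell(X^i_j)}+p(X^i_j)$, and $F(X\setminus\bigcup X^i_j)\cap(X+\mathbb Z)=\emptyset$. For $A_0,\dots,A_n\in{\cal P}$, $\langle A_0\dots A_n\rangle:=F^n(\{x\in T: F^i(x)\in A_i+\mathbb Z,\ 0\le i\le n\})\cap X$. $A_0\dots A_n\sim B_0\dots B_m$ iff for some $k\le\min(n,m)$, $A_{n-i}=B_{m-i}$ ($0\le i\le k$) and $\langle A_0\dots A_{n-k}\rangle=A_{n-k}=B_{m-k}=\langle B_0\dots B_{m-k}\rangle$; then $\langle\cdot\rangle$ is well defined on classes. The covering graph ${\cal G}$: vertices are classes $A_0\dots A_n/\!\sim$ with $\langle A_0\dots A_n\rangle\ne\emptyset$; arrow $\alpha\to\beta$ iff $\alpha=A_0\dots A_n/\!\sim$, $\beta=A_0\dots A_nA_{n+1}/\!\sim$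 for some $A_i\in{\cal P}$. *)

theory Defs
  imports "HOL-Analysis.Analysis"
begin

definition finite_graph :: "'a topology \<Rightarrow> bool" where
  "finite_graph G \<longleftrightarrow> Hausdorff_space G \<and>
     (\<exists>V E. finite V \<and> finite E \<and> V \<subseteq> topspace G \<and>
        (\<forall>e\<in>E. \<exists>g. homeomorphic_map (top_of_set {0..1::real}) (subtopology G e) g \<and>
                 g 0 \<in> V \<and> g 1 \<in> V \<and> g ` {0<..<1} \<inter> V = {}) \<and>
        (\<forall>e\<in>E. \<forall>e'\<in>E. e \<noteq> e' \<longrightarrow> e \<inter> e' \<subseteq> V) \<and>
        topspace G = V \<union> \<Union>E)"

text \<open>The points of h(R) are identified with reals via h; tau is the translation x \<mapsto> x+1.\<close>

abbreviation comps_off_line :: "'a topology \<Rightarrow> (real \<Rightarrow> 'a) \<Rightarrow> 'a set set" where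
  "comps_off_line T h \<equiv> connected_components_of (subtopology T (topspace T - range h))"

definition lifted_graph :: "'a topology \<Rightarrow> (real \<Rightarrow> 'a) \<Rightarrow> ('a \<Rightarrow> 'a) \<Rightarrow> bool" where
  "lifted_graph T h tau \<longleftrightarrow>
     connected_space T \<and>
     range h \<subseteq> topspace T \<and>
     homeomorphic_map euclideanreal (subtopology T (range h)) h \<and>
     homeomorphic_map T T tau \<and>
     (\<forall>x. tau (h x) = h (x + 1)) \<and>
     (\<forall>C \<in> comps_off_line T h.
        finite_graph (subtopology T (T closure_of C)) \<and>
        (\<exists>!z. z \<in> T closure_of C \<inter> range h)) \<and>
     finite {C \<in> comps_off_line T h. T closure_of C \<inter> h ` {0..1} \<noteq> {}}"

text \<open>x + m := tau^m(x), m an integer.\<close>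
definition shift :: "'a topology \<Rightarrow> ('a \<Rightarrow> 'a) \<Rightarrow> int \<Rightarrow> 'a \<Rightarrow> 'a" where
  "shift T tau m x = (if 0 \<le> m then (tau ^^ nat m) x
                      else (inv_into (topspace T) tau ^^ nat (- m)) x)"

definition shifts_all :: "'a topology \<Rightarrow> ('a \<Rightarrow> 'a) \<Rightarrow> 'a set \<Rightarrow> 'a set" where
  "shifts_all T tau A = (\<Union>m. shift T tau m ` A)"

text \<open>The retraction r_R : T \<rightarrow> R (values are points of h(R)).\<close>
definition retrR :: "'a topology \<Rightarrow> (real \<Rightarrow> 'a) \<Rightarrow> 'a \<Rightarrow> 'a" where
  "retrR T h x = (if x \<in> range h then x
     else (THE z. z \<in> range h \<and>
                  z \<in> T closure_of (connected_component_of_set (subtopology T (topspace T - range h)) x)))"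

definition degree_one :: "'a topology \<Rightarrow> ('a \<Rightarrow> 'a) \<Rightarrow> ('a \<Rightarrow> 'a) \<Rightarrow> bool" where
  "degree_one T tau F \<longleftrightarrow> (\<forall>x\<in>topspace T. F (tau x) = tau (F x))"

definition TR :: "'a topology \<Rightarrow> (real \<Rightarrow> 'a) \<Rightarrow> ('a \<Rightarrow> 'a) \<Rightarrow> 'a set" where
  "TR T h F = T closure_of (\<Union>n. (F ^^ n) ` range h)"

definition fundR :: "'a topology \<Rightarrow> (real \<Rightarrow> 'a) \<Rightarrow> 'a set" where
  "fundR T h = {x \<in> topspace T. retrR T h x \<in> h ` {0..<1}}"

definition Xset :: "'a topology \<Rightarrow> (real \<Rightarrow> 'a) \<Rightarrow> ('a \<Rightarrow> 'a) \<Rightarrow> 'a set" where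
  "Xset T h F = T closure_of (topspace T - TR T h F) \<inter> fundR T h"

section \<open>Sun-like maps; branches parametrised by arcs gamma i : [0,1] \<rightarrow> X^i with gamma i 0 = min X^i\<close>

definition sun_like :: "'a topology \<Rightarrow> (real \<Rightarrow> 'a) \<Rightarrow> ('a \<Rightarrow> 'a)
    \<Rightarrow> 'b set \<Rightarrow> ('b \<Rightarrow> real \<Rightarrow> 'a) \<Rightarrow> bool" where
  "sun_like T h F \<Lambda> \<gamma> \<longleftrightarrow>
     finite \<Lambda> \<and>
     (\<forall>i\<in>\<Lambda>. homeomorphic_map (top_of_set {0..1}) (subtopology T (\<gamma> i ` {0..1})) (\<gamma> i) \<and>
              T closure_of (\<gamma> i ` {0<..1}) = \<gamma> i ` {0..1} \<and>
              \<gamma> i 0 \<in> TR T h F \<and> \<gamma> i ` {0<..1} \<inter> TR T h F = {}) \<and>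
     (\<forall>i\<in>\<Lambda>. \<forall>j\<in>\<Lambda>. i \<noteq> j \<longrightarrow> \<gamma> i ` {0..1} \<inter> \<gamma> j ` {0..1} = {}) \<and>
     (topspace T - TR T h F) \<inter> fundR T h = (\<Union>i\<in>\<Lambda>. \<gamma> i ` {0<..1})"

definition branch :: "('b \<Rightarrow> real \<Rightarrow> 'a) \<Rightarrow> 'b \<Rightarrow> 'a set" where
  "branch \<gamma> i = \<gamma> i ` {0..1}"

definition ordc :: "('b \<Rightarrow> real \<Rightarrow> 'a) \<Rightarrow> 'b \<Rightarrow> 'a \<Rightarrow> real" where
  "ordc \<gamma> i x = (THE t. t \<in> {0..1} \<and> \<gamma> i t = x)"

definition bmin :: "('b \<Rightarrow> real \<Rightarrow> 'a) \<Rightarrow> 'b \<Rightarrow> 'a set \<Rightarrow> 'a" where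
  "bmin \<gamma> i A = \<gamma> i (Inf (ordc \<gamma> i ` A))"

definition cinterval :: "('b \<Rightarrow> real \<Rightarrow> 'a) \<Rightarrow> 'b \<Rightarrow> 'a set \<Rightarrow> bool" where
  "cinterval \<gamma> i I \<longleftrightarrow> (\<exists>a b. 0 \<le> a \<and> a \<le> b \<and> b \<le> 1 \<and> I = \<gamma> i ` {a..b})"

definition retrb :: "('b \<Rightarrow> real \<Rightarrow> 'a) \<Rightarrow> 'b \<Rightarrow> 'a \<Rightarrow> 'a" where
  "retrb \<gamma> j x = (if x \<in> branch \<gamma> j then x else \<gamma> j 0)"

definition pos_covers :: "'a topology \<Rightarrow> ('a \<Rightarrow> 'a) \<Rightarrow> ('a \<Rightarrow> 'a) \<Rightarrow> 'b set \<Rightarrow> ('b \<Rightarrow> real \<Rightarrow> 'a)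
    \<Rightarrow> 'a set \<Rightarrow> 'a set \<Rightarrow> nat \<Rightarrow> int \<Rightarrow> bool" where
  "pos_covers T tau F \<Lambda> \<gamma> I J n p \<longleftrightarrow> n \<ge> 1 \<and>
     (\<exists>i\<in>\<Lambda>. \<exists>j\<in>\<Lambda>. cinterval \<gamma> i I \<and> cinterval \<gamma> j J \<and>
        (\<exists>x\<in>I. \<exists>y\<in>I. ordc \<gamma> i x \<le> ordc \<gamma> i y \<and>
            ordc \<gamma> j (retrb \<gamma> j (shift T tau (- p) ((F ^^ n) x))) \<le> ordc \<gamma> j (bmin \<gamma> j J) \<and>
            (\<forall>z\<in>J. ordc \<gamma> j z \<le> ordc \<gamma> j (retrb \<gamma> j (shift T tau (- p) ((F ^^ n) y))))))"

definition basic_partition :: "'a topology \<Rightarrow> (real \<Rightarrow> 'a) \<Rightarrow> ('a \<Rightarrow> 'a) \<Rightarrow> ('a \<Rightarrow> 'a)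
    \<Rightarrow> 'b set \<Rightarrow> ('b \<Rightarrow> real \<Rightarrow> 'a) \<Rightarrow> 'a set set \<Rightarrow> ('a set \<Rightarrow> 'b) \<Rightarrow> ('a set \<Rightarrow> int) \<Rightarrow> bool" where
  "basic_partition T h tau F \<Lambda> \<gamma> P lab p \<longleftrightarrow>
     finite P \<and> pairwise disjnt P \<and>
     (\<forall>A\<in>P. \<exists>i\<in>\<Lambda>. cinterval \<gamma> i A) \<and>
     (\<forall>A\<in>P. lab A \<in> \<Lambda> \<and>
        F ` A \<subseteq> shift T tau (p A) ` branch \<gamma> (lab A) \<union> T interior_of (TR T h F) \<and>
        (\<forall>i\<in>\<Lambda>. A \<subseteq> branch \<gamma> i \<longrightarrow>
            F (bmin \<gamma> i A) = shift T tau (p A) (\<gamma> (lab A) 0))) \<and>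
     F ` (Xset T h F - \<Union>P) \<inter> shifts_all T tau (Xset T h F) = {}"

definition bracket :: "'a topology \<Rightarrow> (real \<Rightarrow> 'a) \<Rightarrow> ('a \<Rightarrow> 'a) \<Rightarrow> ('a \<Rightarrow> 'a)
    \<Rightarrow> 'a set list \<Rightarrow> 'a set" where
  "bracket T h tau F As =
     (F ^^ (length As - 1)) ` {x \<in> topspace T. \<forall>i < length As. (F ^^ i) x \<in> shifts_all T tau (As ! i)}
     \<inter> Xset T h F"

definition seqs :: "'a set set \<Rightarrow> 'a set list set" where
  "seqs P = {As. As \<noteq> [] \<and> set As \<subseteq> P}"

definition seq_rel :: "'a topology \<Rightarrow> (real \<Rightarrow> 'a) \<Rightarrow> ('a \<Rightarrow> 'a) \<Rightarrow> ('a \<Rightarrow> 'a)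
    \<Rightarrow> 'a set list \<Rightarrow> 'a set list \<Rightarrow> bool" where
  "seq_rel T h tau F As Bs \<longleftrightarrow> As \<noteq> [] \<and> Bs \<noteq> [] \<and>
     (let n = length As - 1; m = length Bs - 1 in
      \<exists>k \<le> min n m. (\<forall>i \<le> k. As ! (n - i) = Bs ! (m - i)) \<and>
         bracket T h tau F (take (n - k + 1) As) = As ! (n - k) \<and>
         As ! (n - k) = Bs ! (m - k) \<and>
         bracket T h tau F (take (m - k + 1) Bs) = Bs ! (m - k))"

definition cg_class :: "'a topology \<Rightarrow> (real \<Rightarrow> 'a) \<Rightarrow> ('a \<Rightarrow> 'a) \<Rightarrow> ('a \<Rightarrow> 'a)
    \<Rightarrow> 'a set set \<Rightarrow> 'a set list \<Rightarrow> 'a set list set" where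
  "cg_class T h tau F P As =
     {Bs \<in> seqs P. equivclp (\<lambda>X Y. X \<in> seqs P \<and> Y \<in> seqs P \<and> seq_rel T h tau F X Y) As Bs}"

definition bracket_cl :: "'a topology \<Rightarrow> (real \<Rightarrow> 'a) \<Rightarrow> ('a \<Rightarrow> 'a) \<Rightarrow> ('a \<Rightarrow> 'a)
    \<Rightarrow> 'a set list set \<Rightarrow> 'a set" where
  "bracket_cl T h tau F \<alpha> = bracket T h tau F (SOME As. As \<in> \<alpha>)"

definition cg_vertex :: "'a topology \<Rightarrow> (real \<Rightarrow> 'a) \<Rightarrow> ('a \<Rightarrow> 'a) \<Rightarrow> ('a \<Rightarrow> 'a)
    \<Rightarrow> 'a set set \<Rightarrow> 'a set list set \<Rightarrow> bool" where
  "cg_vertex T h tau F P \<alpha> \<longleftrightarrow>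
     (\<exists>As \<in> seqs P. \<alpha> = cg_class T h tau F P As \<and> bracket T h tau F As \<noteq> {})"

definition cg_arrow :: "'a topology \<Rightarrow> (real \<Rightarrow> 'a) \<Rightarrow> ('a \<Rightarrow> 'a) \<Rightarrow> ('a \<Rightarrow> 'a)
    \<Rightarrow> 'a set set \<Rightarrow> 'a set list set \<Rightarrow> 'a set list set \<Rightarrow> bool" where
  "cg_arrow T h tau F P \<alpha> \<beta> \<longleftrightarrow>
     cg_vertex T h tau F P \<alpha> \<and> cg_vertex T h tau F P \<beta> \<and>
     (\<exists>As \<in> seqs P. \<exists>A' \<in> P. \<alpha> = cg_class T h tau F P As \<and> \<beta> = cg_class T h tau F P (As @ [A']))"

end

theory Submission
  imports Defs
begin
locale LG =
  fixes T :: "'a topology" and h :: "real \<Rightarrow> 'a" and tau :: "'a \<Rightarrow> 'a"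
  assumes lg: "lifted_graph T h tau"
begin

abbreviation "ti \<equiv> inv_into (topspace T) tau"
abbreviation "sh \<equiv> shift T tau"

lemma tau_hom: "homeomorphic_map T T tau" using lg by (simp add: lifted_graph_def)
lemma h_top: "h x \<in> topspace T" using lg by (auto simp: lifted_graph_def)
lemma tau_h: "tau (h x) = h (x+1)" using lg by (simp add: lifted_graph_def)
lemma h_hom: "homeomorphic_map euclideanreal (subtopology T (range h)) h"
  using lg by (simp add: lifted_graph_def)
lemma h_inj: "h x = h y \<Longrightarrow> x = y"
  using homeomorphic_imp_injective_map[OF h_hom] by (auto simp: inj_on_def)

lemma tau_top: "x \<in> topspace T \<Longrightarrow> tau x \<in> topspace T"
  using tau_hom homeomorphic_imp_surjective_map by blast
lemma tau_surj: "tau ` topspace T = topspace T"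
  using tau_hom homeomorphic_imp_surjective_map by blast
lemma tau_inj: "inj_on tau (topspace T)"
  using tau_hom homeomorphic_imp_injective_map by blast
lemma ti_top: "x \<in> topspace T \<Longrightarrow> ti x \<in> topspace T"
  by (metis inv_into_into tau_surj)
lemma tau_ti: "x \<in> topspace T \<Longrightarrow> tau (ti x) = x"
  by (metis f_inv_into_f tau_surj)
lemma ti_tau: "x \<in> topspace T \<Longrightarrow> ti (tau x) = x"
  by (meson inv_into_f_f tau_inj)

lemma ti_cont: "continuous_map T T ti"
proof -
  obtain g where g: "homeomorphic_maps T T tau g" using tau_hom homeomorphic_map_maps by blast
  have "x \<in> topspace T \<Longrightarrow> g x = ti x" for x
    using g unfolding homeomorphic_maps_def
    by (metis continuous_map_image_subset_topspace image_subset_iff ti_tau)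
  then show ?thesis using g continuous_map_eq unfolding homeomorphic_maps_def by metis
qed

lemma tipow_top: "x \<in> topspace T \<Longrightarrow> (ti ^^ n) x \<in> topspace T"
  by (induction n) (auto simp: ti_top)
lemma taupow_top: "x \<in> topspace T \<Longrightarrow> (tau ^^ n) x \<in> topspace T"
  by (induction n) (auto simp: tau_top)

lemma sh_top: "x \<in> topspace T \<Longrightarrow> sh m x \<in> topspace T"
  by (simp add: shift_def tipow_top taupow_top)

lemma sh_0[simp]: "sh 0 x = x" by (simp add: shift_def)

lemma sh_succ: assumes "x \<in> topspace T" shows "sh (m+1) x = tau (sh m x)"
proof (cases "0 \<le> m")
  case True
  then have "nat (m+1) = Suc (nat m)" by simp
  then show ?thesis using True by (simp add: shift_def)
next
  case False
  then have e: "nat (-m) = Suc (nat (-(m+1)))" by simp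
  show ?thesis
  proof (cases "m = -1")
    case True then show ?thesis using assms by (simp add: shift_def tau_ti)
  next
    case False
    then have "\<not> 0 \<le> m + 1" using \<open>\<not> 0 \<le> m\<close> by simp
    then show ?thesis using \<open>\<not> 0 \<le> m\<close> e assms by (simp add: shift_def tau_ti tipow_top)
  qed
qed

lemma sh_pred: assumes "x \<in> topspace T" shows "sh (m-1) x = ti (sh m x)"
  using sh_succ[OF assms, of "m-1"] by (simp add: ti_tau sh_top assms)

lemma sh_add: assumes "x \<in> topspace T" shows "sh m (sh k x) = sh (m+k) x"
proof (induction m rule: int_induct[where k=0])
  case base then show ?case by simp
next
  case (step1 i) then show ?case
    using sh_succ[of "sh k x" i] sh_succ[of x "i+k"] assms sh_top by (simp add: algebra_simps)
next
  case (step2 i) then show ?case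
    using sh_pred[of "sh k x" i] sh_pred[of x "i+k"] assms sh_top by (simp add: algebra_simps)
qed

lemma sh_inv: "x \<in> topspace T \<Longrightarrow> sh (-m) (sh m x) = x"
  by (simp add: sh_add)
lemma sh_inv': "x \<in> topspace T \<Longrightarrow> sh m (sh (-m) x) = x"
  by (simp add: sh_add)

lemma sh_cont: "continuous_map T T (sh m)"
proof (induction m rule: int_induct[where k=0])
  case base
  have "continuous_map T T id" by simp
  then show ?case by (rule continuous_map_eq) simp
next
  case (step1 i)
  have "continuous_map T T (tau \<circ> sh i)"
    using step1 tau_hom homeomorphic_imp_continuous_map continuous_map_compose by blast
  then show ?case by (rule continuous_map_eq) (simp add: sh_succ)
next
  case (step2 i)
  have "continuous_map T T (ti \<circ> sh i)"
    using step2 ti_cont continuous_map_compose by blast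
  then show ?case by (rule continuous_map_eq) (simp add: sh_pred)
qed

lemma sh_hom: "homeomorphic_map T T (sh m)"
proof -
  have "homeomorphic_maps T T (sh m) (sh (-m))"
    unfolding homeomorphic_maps_def using sh_cont sh_inv sh_inv' by auto
  then show ?thesis using homeomorphic_maps_map by blast
qed

lemma sh_inj: "x \<in> topspace T \<Longrightarrow> y \<in> topspace T \<Longrightarrow> sh m x = sh m y \<Longrightarrow> x = y"
  by (metis sh_inv)

lemma sh_h: "sh m (h x) = h (x + of_int m)"
proof (induction m arbitrary: x rule: int_induct[where k=0])
  case base then show ?case by simp
next
  case (step1 i)
  have "sh (i+1) (h x) = tau (sh i (h x))" by (rule sh_succ[OF h_top])
  also have "\<dots> = h (x + of_int i + 1)" using step1 tau_h by simp
  finally show ?case by (simp add: algebra_simps)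
next
  case (step2 i)
  have "h (x + of_int (i - 1)) = ti (h (x + of_int i))"
    using tau_h[of "x + of_int (i - 1)"] by (metis diff_add_cancel of_int_1 of_int_add add.assoc h_top ti_tau)
  then show ?case using sh_pred[OF h_top] step2 by simp
qed

lemma sh_inv_image:
  assumes "S \<subseteq> topspace T" "\<And>m x. x \<in> S \<Longrightarrow> sh m x \<in> S"
  shows "sh m ` S = S"
  using assms by (auto simp: image_iff) (metis sh_inv' subsetD)

end

context LG begin

abbreviation "Yt \<equiv> subtopology T (topspace T - range h)"

lemma range_top: "range h \<subseteq> topspace T" using h_top by auto

lemma range_tau: assumes "x \<in> topspace T" shows "tau x \<in> range h \<longleftrightarrow> x \<in> range h"
proof
  assume "tau x \<in> range h"
  then obtain r where r: "tau x = h r" by auto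
  have "tau (h (r-1)) = tau x" using tau_h[of "r-1"] r by simp
  then have "x = h (r-1)" using tau_inj assms h_top unfolding inj_on_def by metis
  then show "x \<in> range h" by simp
qed (auto simp: tau_h)

lemma tauY: "homeomorphic_map Yt Yt tau"
  by (rule homeomorphic_map_subtopologies_alt[OF tau_hom]) (use range_tau in auto)

lemma retr_basic:
  assumes "x \<in> topspace T" "x \<notin> range h"
  shows "retrR T h x \<in> range h \<and> retrR T h x \<in> T closure_of (connected_component_of_set Yt x)"
    "\<exists>!z. z \<in> T closure_of (connected_component_of_set Yt x) \<inter> range h"
proof -
  have "connected_component_of_set Yt x \<in> comps_off_line T h"
    using assms by (simp add: connected_component_in_connected_components_of)
  then show u: "\<exists>!z. z \<in> T closure_of (connected_component_of_set Yt x) \<inter> range h"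
    using lg by (simp add: lifted_graph_def)
  show "retrR T h x \<in> range h \<and> retrR T h x \<in> T closure_of (connected_component_of_set Yt x)"
  proof -
    have u': "\<exists>!z. z \<in> range h \<and> z \<in> T closure_of (connected_component_of_set Yt x)"
      using u by blast
    show ?thesis unfolding retrR_def using assms theI'[OF u'] by simp
  qed
qed

lemma retr_range: "x \<in> topspace T \<Longrightarrow> retrR T h x \<in> range h"
  using retr_basic[of x] by (cases "x \<in> range h") (auto simp: retrR_def)

lemma retr_top: "x \<in> topspace T \<Longrightarrow> retrR T h x \<in> topspace T"
  using retr_range range_top by blast

lemma retr_tau: assumes x: "x \<in> topspace T" shows "retrR T h (tau x) = tau (retrR T h x)"
proof (cases "x \<in> range h")
  case True
  then show ?thesis using range_tau[OF x] by (simp add: retrR_def)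
next
  case False
  let ?K = "connected_component_of_set Yt x"
  have tx: "tau x \<in> topspace T" "tau x \<notin> range h" using x False range_tau tau_top by auto
  have K': "connected_component_of_set Yt (tau x) = tau ` ?K"
    by (rule homeomorphic_map_connected_component_of[OF tauY]) (use x False in auto)
  have Ksub: "?K \<subseteq> topspace T"
    using connected_component_of_subset_topspace[of Yt x] by auto
  have cl: "T closure_of (tau ` ?K) = tau ` (T closure_of ?K)"
    by (rule homeomorphic_map_closure_of[OF tau_hom Ksub])
  have z0: "retrR T h x \<in> range h" "retrR T h x \<in> T closure_of ?K" using retr_basic[OF x False] by auto
  have "tau (retrR T h x) \<in> T closure_of (connected_component_of_set Yt (tau x)) \<inter> range h"
    using z0 K' cl range_tau retr_top x by auto
  moreover have "retrR T h (tau x) \<in> T closure_of (connected_component_of_set Yt (tau x)) \<inter> range h"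
    using retr_basic(1)[OF tx] by auto
  ultimately show ?thesis using retr_basic(2)[OF tx] by blast
qed

lemma retr_sh: assumes x: "x \<in> topspace T" shows "retrR T h (sh m x) = sh m (retrR T h x)"
proof (induction m rule: int_induct[where k=0])
  case base then show ?case by simp
next
  case (step1 i) then show ?case
    using sh_succ[OF x, of i] sh_succ[OF retr_top[OF x], of i] retr_tau[OF sh_top[OF x]] by simp
next
  case (step2 i)
  let ?y = "sh (i-1) x"
  have "tau ?y = sh i x" using sh_succ[OF x, of "i-1"] by simp
  then have "retrR T h (sh i x) = tau (retrR T h ?y)" using retr_tau[OF sh_top[OF x]] by metis
  then have "retrR T h ?y = ti (retrR T h (sh i x))" using ti_tau retr_top sh_top x by metis
  then show ?case using step2 sh_pred[OF retr_top[OF x], of i] by simp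
qed

lemma fund_unique:
  assumes "x \<in> fundR T h" "sh m x \<in> fundR T h" shows "m = 0"
proof -
  obtain c where c: "retrR T h x = h c" "c \<in> {0..<1}" using assms(1) unfolding fundR_def
    by (auto simp: image_iff)
  have x: "x \<in> topspace T" using assms(1) by (simp add: fundR_def)
  have "retrR T h (sh m x) = h (c + of_int m)" using retr_sh[OF x] c sh_h by simp
  then obtain d where "h (c + of_int m) = h d" "d \<in> {0..<1}" using assms(2) unfolding fundR_def
    by auto
  then have "c + of_int m \<in> {0..<1}" using h_inj by metis
  then show ?thesis using c(2) by auto
qed

end

locale SL = LG T h tau for T :: "'a topology" and h and tau +
  fixes F :: "'a \<Rightarrow> 'a" and \<Lambda> :: "'b set" and \<gamma> :: "'b \<Rightarrow> real \<Rightarrow> 'a"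
  assumes Fc: "continuous_map T T F" and deg: "degree_one T tau F"
    and sun: "sun_like T h F \<Lambda> \<gamma>"
begin

abbreviation "TRs \<equiv> TR T h F"
abbreviation "IR \<equiv> T interior_of TR T h F"
abbreviation "Xs \<equiv> Xset T h F"

lemma F_top: "x \<in> topspace T \<Longrightarrow> F x \<in> topspace T"
  using Fc continuous_map_image_subset_topspace by blast
lemma Fpow_top: "x \<in> topspace T \<Longrightarrow> (F ^^ n) x \<in> topspace T"
  by (induction n) (auto simp: F_top)

lemma F_tau: "x \<in> topspace T \<Longrightarrow> F (tau x) = tau (F x)"
  using deg by (simp add: degree_one_def)

lemma F_ti: assumes "x \<in> topspace T" shows "F (ti x) = ti (F x)"
proof -
  have "tau (F (ti x)) = F x" using F_tau[OF ti_top[OF assms]] tau_ti[OF assms] by simp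
  then show ?thesis using ti_tau F_top ti_top assms by metis
qed

lemma F_sh: assumes x: "x \<in> topspace T" shows "F (sh m x) = sh m (F x)"
proof (induction m rule: int_induct[where k=0])
  case base then show ?case by simp
next
  case (step1 i) then show ?case
    using sh_succ[OF x, of i] sh_succ[OF F_top[OF x], of i] F_tau[OF sh_top[OF x]] by simp
next
  case (step2 i) then show ?case
    using sh_pred[OF x, of i] sh_pred[OF F_top[OF x], of i] F_ti[OF sh_top[OF x]] by simp
qed

lemma Fpow_sh: "x \<in> topspace T \<Longrightarrow> (F ^^ n) (sh m x) = sh m ((F ^^ n) x)"
  by (induction n) (auto simp: F_sh Fpow_top)

lemma TR_closed: "closedin T TRs" by (simp add: TR_def)
lemma TR_top: "TRs \<subseteq> topspace T" using TR_closed closedin_subset by blast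

lemma range_TR: "range h \<subseteq> TRs"
proof -
  have "range h \<subseteq> (F ^^ 0) ` range h" by simp
  then have r1: "range h \<subseteq> (\<Union>n. (F ^^ n) ` range h)" by blast
  have r2: "(\<Union>n. (F ^^ n) ` range h) \<subseteq> topspace T" using Fpow_top h_top by auto
  have r3: "(\<Union>n. (F ^^ n) ` range h) \<subseteq> T closure_of (\<Union>n. (F ^^ n) ` range h)"
    by (rule closure_of_subset[OF r2])
  show ?thesis unfolding TR_def by (rule subset_trans[OF r1 r3])
qed

lemma tau_TR: "tau ` TRs = TRs"
proof -
  let ?U = "\<Union>n. (F ^^ n) ` range h"
  have Fpow_tau: "x \<in> topspace T \<Longrightarrow> (F ^^ n) (tau x) = tau ((F ^^ n) x)" for x n
    using Fpow_sh[of x n 1] sh_succ[of x 0] sh_succ[of "(F ^^ n) x" 0] Fpow_top by simp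
  have U: "?U \<subseteq> topspace T" using Fpow_top h_top by auto
  have "tau ` ?U = ?U"
  proof
    show "tau ` ?U \<subseteq> ?U"
    proof
      fix y assume "y \<in> tau ` ?U"
      then obtain n r where "y = tau ((F ^^ n) (h r))" by auto
      then have "y = (F ^^ n) (h (r+1))" using Fpow_tau[OF h_top] tau_h by simp
      then show "y \<in> ?U" by auto
    qed
  next
    show "?U \<subseteq> tau ` ?U"
    proof
      fix y assume "y \<in> ?U"
      then obtain n r where y: "y = (F ^^ n) (h r)" by auto
      have "y = tau ((F ^^ n) (h (r - 1)))" using y Fpow_tau[OF h_top, of n "r-1"] tau_h[of "r-1"] by simp
      moreover have "(F ^^ n) (h (r - 1)) \<in> ?U" by blast
      ultimately show "y \<in> tau ` ?U" by blast
    qed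
  qed
  then show ?thesis unfolding TR_def using homeomorphic_map_closure_of[OF tau_hom U] by simp
qed

lemma TR_sh: assumes "x \<in> TRs" shows "sh m x \<in> TRs"
proof (induction m rule: int_induct[where k=0])
  case base then show ?case using assms by simp
next
  case (step1 i) then show ?case
    using sh_succ[of x i] assms TR_top tau_TR by auto
next
  case (step2 i)
  then obtain y where y: "y \<in> TRs" "sh i x = tau y" using tau_TR by (metis imageE)
  then show ?case using sh_pred[of x i] assms TR_top ti_tau by (metis subsetD)
qed

lemma sh_TR_eq: "sh m ` TRs = TRs"
  by (rule sh_inv_image[OF TR_top]) (rule TR_sh)

lemma IR_sh: assumes "x \<in> IR" shows "sh m x \<in> IR"
proof -
  have "T interior_of (sh m ` TRs) = sh m ` IR"
    by (rule homeomorphic_map_interior_of[OF sh_hom TR_top])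
  then show ?thesis using sh_TR_eq assms by auto
qed

lemma IR_sub: "IR \<subseteq> TRs" by (rule interior_of_subset)

lemma sunD: "i \<in> \<Lambda> \<Longrightarrow> homeomorphic_map (top_of_set {0..1}) (subtopology T (\<gamma> i ` {0..1})) (\<gamma> i) \<and>
              T closure_of (\<gamma> i ` {0<..1}) = \<gamma> i ` {0..1} \<and>
              \<gamma> i 0 \<in> TRs \<and> \<gamma> i ` {0<..1} \<inter> TRs = {}"
  using sun by (simp add: sun_like_def)

lemma sun_hom: "i \<in> \<Lambda> \<Longrightarrow> homeomorphic_map (top_of_set {0..1}) (subtopology T (\<gamma> i ` {0..1})) (\<gamma> i)"
  using sunD by blast
lemma sun_cl: "i \<in> \<Lambda> \<Longrightarrow> T closure_of (\<gamma> i ` {0<..1}) = \<gamma> i ` {0..1}"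
  using sunD by blast
lemma sun_0: "i \<in> \<Lambda> \<Longrightarrow> \<gamma> i 0 \<in> TRs"
  using sunD by blast
lemma sun_nTR: "i \<in> \<Lambda> \<Longrightarrow> \<gamma> i ` {0<..1} \<inter> TRs = {}"
  using sunD by blast

lemma sun_eq: "(topspace T - TRs) \<inter> fundR T h = (\<Union>i\<in>\<Lambda>. \<gamma> i ` {0<..1})"
  using sun by (simp add: sun_like_def)

lemma br_disj: assumes "i \<in> \<Lambda>" "j \<in> \<Lambda>" "x \<in> branch \<gamma> i" "x \<in> branch \<gamma> j" shows "i = j"
proof -
  have d: "\<forall>i\<in>\<Lambda>. \<forall>j\<in>\<Lambda>. i \<noteq> j \<longrightarrow> \<gamma> i ` {0..1} \<inter> \<gamma> j ` {0..1} = {}"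
    using sun by (simp add: sun_like_def)
  show ?thesis using d assms unfolding branch_def by blast
qed

lemma br_top: assumes "i \<in> \<Lambda>" shows "branch \<gamma> i \<subseteq> topspace T"
proof -
  have e: "\<gamma> i ` topspace (top_of_set {0..1}) = topspace (subtopology T (\<gamma> i ` {0..1}))"
    by (rule homeomorphic_imp_surjective_map[OF sun_hom[OF assms]])
  have e2: "topspace (top_of_set {0..1::real}) = {0..1}" by simp
  show ?thesis using e e2 unfolding branch_def by (metis topspace_subtopology inf_le1)
qed

lemma br_closed: "i \<in> \<Lambda> \<Longrightarrow> closedin T (branch \<gamma> i)"
  using sun_cl unfolding branch_def by (metis closedin_closure_of)

lemma gam_inj: assumes "i \<in> \<Lambda>" "s \<in> {0..1}" "t \<in> {0..1}" "\<gamma> i s = \<gamma> i t" shows "s = t"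
  using homeomorphic_imp_injective_map[OF sun_hom[OF assms(1)]] assms
  unfolding inj_on_def by auto

lemma gam_cont: assumes "i \<in> \<Lambda>" shows "continuous_map (top_of_set {0..1}) T (\<gamma> i)"
  using homeomorphic_imp_continuous_map[OF sun_hom[OF assms]]
  by (rule continuous_map_into_fulltopology)

lemma gam_top: "i \<in> \<Lambda> \<Longrightarrow> t \<in> {0..1} \<Longrightarrow> \<gamma> i t \<in> topspace T"
  using br_top unfolding branch_def by blast

lemma ordc_gam: assumes "i \<in> \<Lambda>" "t \<in> {0..1}" shows "ordc \<gamma> i (\<gamma> i t) = t"
  unfolding ordc_def using gam_inj[OF assms(1)] assms(2) by (intro the_equality) auto

lemma gam_notTR: "i \<in> \<Lambda> \<Longrightarrow> t \<in> {0<..1} \<Longrightarrow> \<gamma> i t \<notin> TRs"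
  using sun_nTR by blast

lemma gam0_TR: "i \<in> \<Lambda> \<Longrightarrow> \<gamma> i 0 \<in> TRs" using sun_0 by blast

lemma gam_notR: "i \<in> \<Lambda> \<Longrightarrow> t \<in> {0<..1} \<Longrightarrow> \<gamma> i t \<notin> range h"
  using gam_notTR range_TR by blast

lemma conn_gam: assumes "i \<in> \<Lambda>" "S \<subseteq> {0..1}" "connected S" shows "connectedin T (\<gamma> i ` S)"
proof -
  have "connectedin (top_of_set {0..1}) S" using assms by (simp add: connectedin_subtopology)
  then show ?thesis using connectedin_continuous_map_image[OF gam_cont[OF assms(1)]] by blast
qed

lemma gam0_cl: assumes "i \<in> \<Lambda>" shows "\<gamma> i 0 \<in> T closure_of (\<gamma> i ` {0<..1})"
  using sun_cl[OF assms] by auto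

lemma br_IR: assumes "i \<in> \<Lambda>" "x \<in> branch \<gamma> i" shows "x \<notin> IR"
proof
  assume xI: "x \<in> IR"
  obtain t where t: "t \<in> {0..1}" "x = \<gamma> i t" using assms by (auto simp: branch_def)
  show False
  proof (cases "t = 0")
    case True
    then have "\<gamma> i 0 \<in> T closure_of (\<gamma> i ` {0<..1})" using gam0_cl[OF assms(1)] by simp
    then have "\<forall>U. \<gamma> i 0 \<in> U \<and> openin T U \<longrightarrow> (\<exists>y. y \<in> \<gamma> i ` {0<..1} \<and> y \<in> U)"
      unfolding in_closure_of by blast
    moreover have "\<gamma> i 0 \<in> IR" using xI True t by simp
    ultimately obtain y where "y \<in> \<gamma> i ` {0<..1}" "y \<in> IR"
      using openin_interior_of by blast
    then show False using gam_notTR[OF assms(1)] IR_sub by blast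
  next
    case False
    then show False using gam_notTR[OF assms(1), of t] t xI IR_sub by auto
  qed
qed

lemma gam_fund: assumes i: "i \<in> \<Lambda>" and t: "t \<in> {0..1}" shows "\<gamma> i t \<in> fundR T h"
proof (cases "t = 0")
  case False
  then have "\<gamma> i t \<in> \<gamma> i ` {0<..1}" using t by auto
  then have "\<gamma> i t \<in> (\<Union>i\<in>\<Lambda>. \<gamma> i ` {0<..1})" using i by blast
  then show ?thesis using sun_eq by blast
next
  case True
  have "\<gamma> i 1 \<in> \<gamma> i ` {0<..1}" by auto
  then have "\<gamma> i 1 \<in> (\<Union>i\<in>\<Lambda>. \<gamma> i ` {0<..1})" using i by blast
  then have g1: "\<gamma> i 1 \<in> fundR T h" using sun_eq by blast
  have g0top: "\<gamma> i 0 \<in> topspace T" using gam_top i by simp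
  have g1top: "\<gamma> i 1 \<in> topspace T" using gam_top i by simp
  have g1R: "\<gamma> i 1 \<notin> range h" using gam_notR i by simp
  have s1: "\<gamma> i ` {0<..1} \<subseteq> topspace T - range h"
  proof
    fix y assume "y \<in> \<gamma> i ` {0<..1}"
    then obtain t where "t \<in> {0<..1}" "y = \<gamma> i t" by auto
    then show "y \<in> topspace T - range h" using gam_notR[OF i] gam_top[OF i, of t] by auto
  qed
  have cY: "connectedin Yt (\<gamma> i ` {0<..1})"
  proof -
    have ss: "{0<..(1::real)} \<subseteq> {0..1}" by auto
    show ?thesis unfolding connectedin_subtopology using conn_gam[OF i ss] s1 by simp
  qed
  let ?K = "connected_component_of_set Yt (\<gamma> i 1)"
  have sub: "\<gamma> i ` {0<..1} \<subseteq> ?K" by (rule connected_component_of_maximal[OF cY]) auto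
  show ?thesis
  proof (cases "\<gamma> i 0 \<in> range h")
    case True
    have "\<gamma> i 0 \<in> T closure_of ?K" using gam0_cl[OF i] closure_of_mono[OF sub] by blast
    then have "retrR T h (\<gamma> i 1) = \<gamma> i 0"
      using retr_basic[OF g1top g1R] True by blast
    moreover have "retrR T h (\<gamma> i 0) = \<gamma> i 0" using True by (simp add: retrR_def)
    ultimately show ?thesis using g1 g0top \<open>t = 0\<close> by (simp add: fundR_def)
  next
    case False
    have "\<gamma> i ` {0..1} = insert (\<gamma> i 0) (\<gamma> i ` {0<..1})" by (auto simp: less_eq_real_def)
    then have s2: "\<gamma> i ` {0..1} \<subseteq> topspace T - range h" using s1 False g0top by auto
    have cY2: "connectedin Yt (\<gamma> i ` {0..1})"
      unfolding connectedin_subtopology using conn_gam[OF i, of "{0..1}"] s2 by auto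
    have "\<gamma> i ` {0..1} \<subseteq> connected_component_of_set Yt (\<gamma> i 0)"
      by (rule connected_component_of_maximal[OF cY2]) auto
    moreover have "\<gamma> i 1 \<in> \<gamma> i ` {0..1}" by simp
    ultimately have "\<gamma> i 1 \<in> connected_component_of_set Yt (\<gamma> i 0)" by blast
    then have "connected_component_of Yt (\<gamma> i 0) (\<gamma> i 1)" by simp
    then have "connected_component_of Yt (\<gamma> i 0) = connected_component_of Yt (\<gamma> i 1)"
      using connected_component_of_equiv by metis
    then have "connected_component_of_set Yt (\<gamma> i 0) = ?K" by simp
    then have "retrR T h (\<gamma> i 0) = retrR T h (\<gamma> i 1)"
      using False g1R by (simp add: retrR_def)
    then show ?thesis using g1 g0top \<open>t = 0\<close> by (simp add: fundR_def)
  qed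
qed

lemma br_fund: "i \<in> \<Lambda> \<Longrightarrow> branch \<gamma> i \<subseteq> fundR T h"
  using gam_fund unfolding branch_def by blast

lemma br_X: assumes i: "i \<in> \<Lambda>" shows "branch \<gamma> i \<subseteq> Xs"
proof -
  have "\<gamma> i ` {0<..1} \<subseteq> topspace T - TRs" using gam_notTR[OF i] gam_top[OF i] by auto
  then have "T closure_of (\<gamma> i ` {0<..1}) \<subseteq> T closure_of (topspace T - TRs)"
    by (rule closure_of_mono)
  then show ?thesis using sun_cl[OF i] br_fund[OF i] unfolding Xset_def branch_def by auto
qed

lemma X_fund: "Xs \<subseteq> fundR T h" by (auto simp: Xset_def)
lemma X_top: "Xs \<subseteq> topspace T" by (auto simp: Xset_def fundR_def)

lemma X_sh: "x \<in> Xs \<Longrightarrow> sh m x \<in> Xs \<Longrightarrow> m = 0"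
  using fund_unique X_fund by blast

lemma ordc_cont: assumes i: "i \<in> \<Lambda>"
  shows "continuous_map (subtopology T (branch \<gamma> i)) euclideanreal (ordc \<gamma> i)"
proof -
  obtain g where g: "homeomorphic_maps (top_of_set {0..1}) (subtopology T (\<gamma> i ` {0..1})) (\<gamma> i) g"
    using sun_hom[OF i] homeomorphic_map_maps by blast
  have c: "continuous_map (subtopology T (\<gamma> i ` {0..1})) (top_of_set {0..1}) g"
    using g by (simp add: homeomorphic_maps_def)
  have "x \<in> topspace (subtopology T (\<gamma> i ` {0..1})) \<Longrightarrow> g x = ordc \<gamma> i x" for x
    using g ordc_gam[OF i] unfolding homeomorphic_maps_def by auto
  then have "continuous_map (subtopology T (\<gamma> i ` {0..1})) (top_of_set {0..1}) (ordc \<gamma> i)"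
    using continuous_map_eq[OF c] by blast
  then show ?thesis unfolding branch_def using continuous_map_into_fulltopology by blast
qed

end

locale BP = SL T h tau F \<Lambda> \<gamma> for T :: "'a topology" and h tau F and \<Lambda> :: "'b set" and \<gamma> +
  fixes P :: "'a set set" and lab :: "'a set \<Rightarrow> 'b" and p :: "'a set \<Rightarrow> int"
  assumes bp: "basic_partition T h tau F \<Lambda> \<gamma> P lab p"
begin

lemma P_int: "A \<in> P \<Longrightarrow> \<exists>i\<in>\<Lambda>. cinterval \<gamma> i A"
  using bp by (simp add: basic_partition_def)

lemma P_map: "A \<in> P \<Longrightarrow> lab A \<in> \<Lambda> \<and>
        F ` A \<subseteq> sh (p A) ` branch \<gamma> (lab A) \<union> IR \<and>
        (\<forall>i\<in>\<Lambda>. A \<subseteq> branch \<gamma> i \<longrightarrow> F (bmin \<gamma> i A) = sh (p A) (\<gamma> (lab A) 0))"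
  using bp by (simp add: basic_partition_def)

lemma P_disj: "A \<in> P \<Longrightarrow> B \<in> P \<Longrightarrow> x \<in> A \<Longrightarrow> x \<in> B \<Longrightarrow> A = B"
proof -
  have "pairwise disjnt P" using bp by (simp add: basic_partition_def)
  then show "A \<in> P \<Longrightarrow> B \<in> P \<Longrightarrow> x \<in> A \<Longrightarrow> x \<in> B \<Longrightarrow> A = B"
    unfolding pairwise_def disjnt_def by blast
qed

lemma cint_br: "cinterval \<gamma> i A \<Longrightarrow> A \<subseteq> branch \<gamma> i"
  by (auto simp: cinterval_def branch_def)

lemma P_X: "A \<in> P \<Longrightarrow> A \<subseteq> Xs"
  using P_int cint_br br_X by blast

lemma P_top: "A \<in> P \<Longrightarrow> A \<subseteq> topspace T"
  using P_X X_top by blast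

lemma shifts_all_iff: "y \<in> shifts_all T tau A \<longleftrightarrow> (\<exists>m a. a \<in> A \<and> y = sh m a)"
  by (auto simp: shifts_all_def)

definition Sset :: "'a set list \<Rightarrow> 'a set" where
  "Sset As = (F ^^ (length As - 1)) ` {x \<in> topspace T. \<forall>i < length As. (F ^^ i) x \<in> shifts_all T tau (As ! i)}"

lemma bracket_S: "bracket T h tau F As = Sset As \<inter> Xs"
  by (simp add: bracket_def Sset_def)

lemma Sset_sh:
  assumes As: "set As \<subseteq> P" and y: "y \<in> Sset As" shows "sh m y \<in> Sset As"
proof -
  obtain x where x: "x \<in> topspace T" "\<forall>i < length As. (F ^^ i) x \<in> shifts_all T tau (As ! i)"
    "y = (F ^^ (length As - 1)) x"
    using y unfolding Sset_def by auto
  have "\<forall>i < length As. (F ^^ i) (sh m x) \<in> shifts_all T tau (As ! i)"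
  proof (intro allI impI)
    fix i assume i: "i < length As"
    then obtain k a where ka: "a \<in> As ! i" "(F ^^ i) x = sh k a" using x(2) shifts_all_iff by metis
    have "As ! i \<in> P" using As i by auto
    then have a: "a \<in> topspace T" using ka P_top by blast
    have "(F ^^ i) (sh m x) = sh (m + k) a" using Fpow_sh[OF x(1)] ka sh_add[OF a] by simp
    then show "(F ^^ i) (sh m x) \<in> shifts_all T tau (As ! i)" using ka shifts_all_iff by blast
  qed
  moreover have "sh m y = (F ^^ (length As - 1)) (sh m x)" using Fpow_sh[OF x(1)] x(3) by simp
  ultimately show ?thesis unfolding Sset_def using sh_top[OF x(1)] by blast
qed

lemma Sset_last:
  assumes "As \<noteq> []" "y \<in> Sset As" shows "y \<in> shifts_all T tau (last As)"
proof -
  obtain x where x: "x \<in> topspace T" "\<forall>i < length As. (F ^^ i) x \<in> shifts_all T tau (As ! i)"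
    "y = (F ^^ (length As - 1)) x"
    using assms unfolding Sset_def by auto
  then show ?thesis using assms(1) by (simp add: last_conv_nth)
qed

lemma Sset_snoc:
  assumes "As \<noteq> []"
  shows "Sset (As @ [B]) = F ` {y \<in> Sset As. F y \<in> shifts_all T tau B}"
proof -
  let ?n = "length As"
  have n: "?n = Suc (?n - 1)" using assms by simp
  have cond: "(\<forall>i < length (As @ [B]). (F ^^ i) x \<in> shifts_all T tau ((As @ [B]) ! i)) \<longleftrightarrow>
      (\<forall>i < ?n. (F ^^ i) x \<in> shifts_all T tau (As ! i)) \<and> (F ^^ ?n) x \<in> shifts_all T tau B" for x
    by (auto simp: nth_append less_Suc_eq)
  have pw: "(F ^^ ?n) x = F ((F ^^ (?n - 1)) x)" for x
    by (subst n) simp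
  show ?thesis
    unfolding Sset_def cond by (auto simp: pw image_iff)
qed

lemma bracket_sub_last:
  assumes As: "As \<in> seqs P" shows "bracket T h tau F As \<subseteq> last As"
proof
  fix y assume y: "y \<in> bracket T h tau F As"
  have ne: "As \<noteq> []" and L: "last As \<in> P" using As by (auto simp: seqs_def)
  obtain k a where ka: "a \<in> last As" "y = sh k a"
    using Sset_last[OF ne] y bracket_S shifts_all_iff by blast
  have "a \<in> Xs" using ka L P_X by blast
  then have "k = 0" using X_sh y ka bracket_S by blast
  then show "y \<in> last As" using ka by simp
qed

lemma Sset_decomp:
  assumes As: "As \<in> seqs P" and y: "y \<in> Sset As"
  shows "\<exists>k w. w \<in> bracket T h tau F As \<and> y = sh k w"
proof -
  have ne: "As \<noteq> []" and L: "last As \<in> P" and sP: "set As \<subseteq> P" using As by (auto simp: seqs_def)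
  obtain k a where ka: "a \<in> last As" "y = sh k a"
    using Sset_last[OF ne y] shifts_all_iff by blast
  have a: "a \<in> Xs" "a \<in> topspace T" using ka L P_X P_top by blast+
  have "a = sh (-k) y" using ka sh_inv a by simp
  then have "a \<in> Sset As" using Sset_sh[OF sP y] by simp
  then show ?thesis using a ka bracket_S by blast
qed

definition Next :: "'a set \<Rightarrow> 'a set \<Rightarrow> 'a set \<Rightarrow> 'a set" where
  "Next I A B = {z \<in> B. \<exists>w\<in>I. F w = sh (p A) z}"

lemma bracket_snoc:
  assumes As: "As \<in> seqs P" and B: "B \<in> P"
  shows "bracket T h tau F (As @ [B]) = Next (bracket T h tau F As) (last As) B"
proof
  have ne: "As \<noteq> []" and L: "last As \<in> P" and sP: "set As \<subseteq> P" using As by (auto simp: seqs_def)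
  let ?L = "last As"
  show "bracket T h tau F (As @ [B]) \<subseteq> Next (bracket T h tau F As) (last As) B"
  proof
    fix z assume z: "z \<in> bracket T h tau F (As @ [B])"
    then have zX: "z \<in> Xs" using bracket_S by blast
    obtain y where y: "y \<in> Sset As" "F y \<in> shifts_all T tau B" "z = F y"
      using z bracket_S Sset_snoc[OF ne] by auto
    obtain k w where kw: "w \<in> bracket T h tau F As" "y = sh k w" using Sset_decomp[OF As y(1)] by blast
    have wL: "w \<in> ?L" using kw bracket_sub_last[OF As] by blast
    have wt: "w \<in> topspace T" using wL L P_top by blast
    have zk: "z = sh k (F w)" using y kw F_sh[OF wt] by simp
    obtain m b where mb: "b \<in> B" "F y = sh m b" using y(2) shifts_all_iff by blast
    have bt: "b \<in> topspace T" and bX: "b \<in> Xs" using mb B P_top P_X by blast+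
    obtain j where j: "j \<in> \<Lambda>" "B \<subseteq> branch \<gamma> j" using P_int[OF B] cint_br by blast
    have Fw: "F w \<in> sh (p ?L) ` branch \<gamma> (lab ?L) \<union> IR" using P_map[OF L] wL by blast
    have zt: "z \<in> topspace T" using zX X_top by blast
    have bz: "b = sh (-m) z" using mb y(3) sh_inv[OF bt] by simp
    show "z \<in> Next (bracket T h tau F As) (last As) B"
    proof (cases "F w \<in> IR")
      case True
      then have "z \<in> IR" using zk IR_sh by simp
      then have "b \<in> IR" using bz IR_sh by simp
      then show ?thesis using br_IR[OF j(1)] j(2) mb(1) by blast
    next
      case False
      then obtain u where u: "u \<in> branch \<gamma> (lab ?L)" "F w = sh (p ?L) u" using Fw by blast
      have lab: "lab ?L \<in> \<Lambda>" using P_map[OF L] by blast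
      have uX: "u \<in> Xs" and ut: "u \<in> topspace T" using u br_X[OF lab] X_top by blast+
      have "z = sh (k + p ?L) u" using zk u sh_add[OF ut] by simp
      then have "k + p ?L = 0" using X_sh[OF uX] zX by simp
      then have zu: "z = u" using \<open>z = sh (k + p ?L) u\<close> by simp
      have "m = 0" using X_sh[OF bX] zX mb y(3) by simp
      then have "z = b" using mb y(3) by simp
      then show ?thesis unfolding Next_def using mb(1) kw(1) u(2) zu by blast
    qed
  qed
next
  have ne: "As \<noteq> []" and sP: "set As \<subseteq> P" using As by (auto simp: seqs_def)
  show "Next (bracket T h tau F As) (last As) B \<subseteq> bracket T h tau F (As @ [B])"
  proof
    fix z assume "z \<in> Next (bracket T h tau F As) (last As) B"
    then obtain w where zw: "z \<in> B" "w \<in> bracket T h tau F As" "F w = sh (p (last As)) z"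
      unfolding Next_def by blast
    have zt: "z \<in> topspace T" and zX: "z \<in> Xs" using zw(1) B P_top P_X by blast+
    have wS: "w \<in> Sset As" and wt: "w \<in> topspace T" using zw(2) bracket_S X_top by blast+
    let ?y = "sh (- p (last As)) w"
    have yS: "?y \<in> Sset As" using Sset_sh[OF sP wS] .
    have Fy: "F ?y = z" using F_sh[OF wt] zw(3) sh_inv[OF zt] by simp
    have "z \<in> shifts_all T tau B" using zw(1) shifts_all_iff by (metis sh_0)
    then have "z \<in> Sset (As @ [B])" using Sset_snoc[OF ne] yS Fy by (auto simp: image_iff)
    then show "z \<in> bracket T h tau F (As @ [B])" using zX bracket_S by blast
  qed
qed

lemma bracket_single:
  assumes A: "A \<in> P" shows "bracket T h tau F [A] = A"
proof
  show "bracket T h tau F [A] \<subseteq> A"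
    using bracket_sub_last[of "[A]"] A by (simp add: seqs_def)
next
  show "A \<subseteq> bracket T h tau F [A]"
  proof
    fix a assume a: "a \<in> A"
    then have "a \<in> shifts_all T tau A" using shifts_all_iff by (metis sh_0)
    then have "a \<in> Sset [A]" unfolding Sset_def using a A P_top by auto
    then show "a \<in> bracket T h tau F [A]" using a A P_X bracket_S by blast
  qed
qed

fun brf :: "'a set \<Rightarrow> 'a set \<Rightarrow> 'a set list \<Rightarrow> 'a set" where
  "brf I L [] = I"
| "brf I L (B # Bs) = brf (Next I L B) B Bs"

lemma bracket_append:
  assumes "Pre \<in> seqs P" "set Suf \<subseteq> P"
  shows "bracket T h tau F (Pre @ Suf) = brf (bracket T h tau F Pre) (last Pre) Suf"
  using assms
proof (induction Suf arbitrary: Pre)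
  case Nil then show ?case by simp
next
  case (Cons B Bs)
  have s: "Pre @ [B] \<in> seqs P" using Cons.prems by (auto simp: seqs_def)
  have "bracket T h tau F (Pre @ (B # Bs)) = bracket T h tau F ((Pre @ [B]) @ Bs)" by simp
  also have "\<dots> = brf (bracket T h tau F (Pre @ [B])) B Bs"
    using Cons.IH[OF s] Cons.prems by simp
  also have "\<dots> = brf (Next (bracket T h tau F Pre) (last Pre) B) B Bs"
    using bracket_snoc[OF Cons.prems(1)] Cons.prems by simp
  finally show ?case by simp
qed

lemma seq_rel_bracket:
  assumes As: "As \<in> seqs P" and Bs: "Bs \<in> seqs P" and r: "seq_rel T h tau F As Bs"
  shows "bracket T h tau F As = bracket T h tau F Bs"
proof -
  define n where "n = length As - 1"
  define m where "m = length Bs - 1"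
  obtain k where k: "k \<le> min n m" "\<forall>i \<le> k. As ! (n - i) = Bs ! (m - i)"
    "bracket T h tau F (take (n - k + 1) As) = As ! (n - k)"
    "As ! (n - k) = Bs ! (m - k)"
    "bracket T h tau F (take (m - k + 1) Bs) = Bs ! (m - k)"
    using r unfolding seq_rel_def n_def m_def Let_def by blast
  have neA: "As \<noteq> []" and neB: "Bs \<noteq> []" and sA: "set As \<subseteq> P" and sB: "set Bs \<subseteq> P"
    using As Bs by (auto simp: seqs_def)
  have lA: "length As = n + 1" and lB: "length Bs = m + 1" using neA neB n_def m_def by auto
  let ?PA = "take (n - k + 1) As" and ?SA = "drop (n - k + 1) As"
  let ?PB = "take (m - k + 1) Bs" and ?SB = "drop (m - k + 1) Bs"
  have PA: "?PA \<in> seqs P" using neA sA set_take_subset by (fastforce simp: seqs_def)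
  have PB: "?PB \<in> seqs P" using neB sB set_take_subset by (fastforce simp: seqs_def)
  have SA: "set ?SA \<subseteq> P" using sA set_drop_subset by fastforce
  have SB: "set ?SB \<subseteq> P" using sB set_drop_subset by fastforce
  have lastA: "last ?PA = As ! (n - k)"
    using lA k(1) by (simp add: take_Suc_conv_app_nth)
  have lastB: "last ?PB = Bs ! (m - k)"
    using lB k(1) by (simp add: take_Suc_conv_app_nth)
  have SS: "?SA = ?SB"
  proof (rule nth_equalityI)
    show "length ?SA = length ?SB" using lA lB k(1) by simp
  next
    fix i assume i: "i < length ?SA"
    then have ik: "i < k" using lA k(1) by simp
    have "k - 1 - i \<le> k" by simp
    then have "As ! (n - (k - 1 - i)) = Bs ! (m - (k - 1 - i))" using k(2) by blast
    moreover have "n - (k - 1 - i) = n - k + 1 + i" "m - (k - 1 - i) = m - k + 1 + i"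
      using ik k(1) by auto
    ultimately show "?SA ! i = ?SB ! i" using lA lB k(1) ik by simp
  qed
  have "bracket T h tau F As = bracket T h tau F (?PA @ ?SA)" by simp
  also have "\<dots> = brf (As ! (n - k)) (As ! (n - k)) ?SA"
    using bracket_append[OF PA SA] k(3) lastA by simp
  also have "\<dots> = brf (Bs ! (m - k)) (Bs ! (m - k)) ?SB" using SS k(4) by simp
  also have "\<dots> = bracket T h tau F (?PB @ ?SB)"
    using bracket_append[OF PB SB] k(5) lastB by simp
  finally show ?thesis by simp
qed

lemma class_bracket:
  assumes "Bs \<in> cg_class T h tau F P As"
  shows "bracket T h tau F Bs = bracket T h tau F As"
proof -
  have e: "equivclp (\<lambda>X Y. X \<in> seqs P \<and> Y \<in> seqs P \<and> seq_rel T h tau F X Y) As Bs"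
    using assms by (simp add: cg_class_def)
  have "bracket T h tau F As = bracket T h tau F Bs"
    using e
  proof (induction rule: equivclp_induct)
    case base then show ?case by simp
  next
    case (step y z) then show ?case using seq_rel_bracket by metis
  qed
  then show ?thesis by simp
qed

lemma class_cl:
  assumes "As \<in> seqs P" shows "bracket_cl T h tau F (cg_class T h tau F P As) = bracket T h tau F As"
proof -
  have "As \<in> cg_class T h tau F P As" using assms by (simp add: cg_class_def)
  then have "(SOME Bs. Bs \<in> cg_class T h tau F P As) \<in> cg_class T h tau F P As" by (rule someI)
  then show ?thesis unfolding bracket_cl_def using class_bracket by blast
qed

end

context BP begin

lemma bmin_seg: assumes i: "i \<in> \<Lambda>" and ab: "0 \<le> a" "a \<le> b" "b \<le> 1"
  shows "bmin \<gamma> i (\<gamma> i ` {a..b}) = \<gamma> i a"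
proof -
  have "ordc \<gamma> i ` \<gamma> i ` {a..b} = {a..b}"
    using ordc_gam[OF i] ab by (force simp: image_image image_iff)
  then show ?thesis using ab by (simp add: bmin_def)
qed

lemma seg_closed: assumes l: "l \<in> \<Lambda>" and uv: "0 \<le> u" "v \<le> 1"
  shows "closedin T (\<gamma> l ` {u..v})"
proof -
  have c1: "closedin (top_of_set {0..1}) {u..v}"
    by (rule closed_subset) (use uv in auto)
  have "closedin (subtopology T (\<gamma> l ` {0..1})) (\<gamma> l ` {u..v})"
    using homeomorphic_map_closedness[OF sun_hom[OF l], of "{u..v}"] c1 uv by auto
  then show ?thesis using br_closed[OF l] closedin_trans_full unfolding branch_def by blast
qed

lemma sh_closed: "closedin T S \<Longrightarrow> closedin T (sh q ` S)"
  using homeomorphic_map_closedness[OF sh_hom] closedin_subset by blast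

lemma next_lab:
  assumes j: "j \<in> \<Lambda>" and z: "z \<in> branch \<gamma> j" and A: "A \<in> P" and w: "w \<in> A"
    and Fw: "F w = sh (p A) z"
  shows "j = lab A"
proof -
  have Fw2: "F w \<in> sh (p A) ` branch \<gamma> (lab A) \<union> IR" using P_map[OF A] w by blast
  have lab: "lab A \<in> \<Lambda>" using P_map[OF A] by blast
  have zt: "z \<in> topspace T" using z br_top[OF j] by blast
  show ?thesis
  proof (cases "F w \<in> IR")
    case True
    then have "sh (- p A) (F w) \<in> IR" using IR_sh by blast
    then have "z \<in> IR" using Fw sh_inv[OF zt] by simp
    then show ?thesis using br_IR[OF j z] by blast
  next
    case False
    then obtain u where u: "u \<in> branch \<gamma> (lab A)" "F w = sh (p A) u" using Fw2 by blast
    have "u \<in> topspace T" using u br_top[OF lab] by blast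
    then have "u = z" using sh_inj[OF _ zt] u Fw by metis
    then show ?thesis using br_disj[OF j lab] z u by blast
  qed
qed

lemma core:
  assumes A: "A \<in> P" and i: "i \<in> \<Lambda>" and Aeq: "A = \<gamma> i ` {a..b}"
    and ae: "0 \<le> a" "a \<le> e" "e \<le> b" "b \<le> 1"
  shows "\<exists>e'. 0 \<le> e' \<and> e' \<le> 1 \<and>
     {t \<in> {0..1}. sh (p A) (\<gamma> (lab A) t) \<in> F ` \<gamma> i ` {a..e}} = {0..e'}"
proof -
  let ?l = "lab A" and ?q = "p A" and ?C = "F ` \<gamma> i ` {a..e}"
  define Q where "Q = {t \<in> {0..1}. sh ?q (\<gamma> ?l t) \<in> ?C}"
  have l: "?l \<in> \<Lambda>" using P_map[OF A] by blast
  have Abr: "A \<subseteq> branch \<gamma> i" using Aeq ae by (auto simp: branch_def)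
  have bm: "bmin \<gamma> i A = \<gamma> i a" using bmin_seg[OF i] ae Aeq by simp
  have Fa: "F (\<gamma> i a) = sh ?q (\<gamma> ?l 0)" using P_map[OF A] i Abr bm by metis
  have segA: "\<gamma> i ` {a..e} \<subseteq> A" using Aeq ae by auto
  have Csub: "?C \<subseteq> sh ?q ` branch \<gamma> ?l \<union> IR" using P_map[OF A] segA by blast
  have aC: "sh ?q (\<gamma> ?l 0) \<in> ?C" using Fa ae by (metis atLeastAtMost_iff image_eqI order_refl)
  have Q0: "0 \<in> Q" using aC unfolding Q_def by simp
  have Qsub: "Q \<subseteq> {0..1}" unfolding Q_def by auto
  have segT: "\<gamma> i ` {a..e} \<subseteq> topspace T" using gam_top[OF i] ae by auto
  (* connectedness gives downward closure *)
  have Cconn: "connectedin T ?C"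
  proof -
    have "connectedin T (\<gamma> i ` {a..e})" by (rule conn_gam[OF i]) (use ae in auto)
    then show ?thesis using connectedin_continuous_map_image[OF Fc] by blast
  qed
  have down: "s \<in> Q" if tQ: "t \<in> Q" and s: "0 \<le> s" "s \<le> t" for s t
  proof (rule ccontr)
    assume sQ: "s \<notin> Q"
    have t1: "t \<le> 1" using tQ Qsub by auto
    have s0: "0 < s" using sQ Q0 s by (cases "s = 0") auto
    have st: "s < t" using sQ tQ s by (cases "s = t") auto
    define E1 where "E1 = sh ?q ` \<gamma> ?l ` {s..1}"
    define E2 where "E2 = sh ?q ` \<gamma> ?l ` {0..s} \<union> TRs"
    have cE1: "closedin T E1" unfolding E1_def
      by (rule sh_closed, rule seg_closed[OF l]) (use s0 in auto)
    have cE2: "closedin T E2" unfolding E2_def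
      by (rule closedin_Un, rule sh_closed, rule seg_closed[OF l]) (use s t1 st in auto, rule TR_closed)
    have cov: "?C \<subseteq> E1 \<union> E2"
    proof
      fix c assume c: "c \<in> ?C"
      show "c \<in> E1 \<union> E2"
      proof (cases "c \<in> IR")
        case True then show ?thesis using IR_sub unfolding E2_def by blast
      next
        case False
        then have "c \<in> sh ?q ` branch \<gamma> ?l" using Csub c by blast
        then obtain r where r: "r \<in> {0..1}" "c = sh ?q (\<gamma> ?l r)" unfolding branch_def by blast
        show ?thesis
        proof (cases "s \<le> r")
          case True then show ?thesis using r unfolding E1_def by auto
        next
          case False then show ?thesis using r unfolding E2_def by auto
        qed
      qed
    qed
    have disj: "E1 \<inter> E2 \<inter> ?C = {}"
    proof (rule ccontr)
      assume "E1 \<inter> E2 \<inter> ?C \<noteq> {}"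
      then obtain c where c: "c \<in> E1" "c \<in> E2" "c \<in> ?C" by blast
      then obtain r where r: "r \<in> {s..1}" "c = sh ?q (\<gamma> ?l r)" unfolding E1_def by auto
      have r01: "r \<in> {0..1}" using r s by auto
      have gt: "\<gamma> ?l r \<in> topspace T" using gam_top[OF l r01] .
      show False
      proof (cases "c \<in> TRs")
        case True
        then have "sh (- ?q) c \<in> TRs" by (rule TR_sh)
        then have "\<gamma> ?l r \<in> TRs" using r sh_inv[OF gt] by simp
        then show False using gam_notTR[OF l, of r] r s0 by auto
      next
        case False
        then obtain r' where r': "r' \<in> {0..s}" "c = sh ?q (\<gamma> ?l r')" using c(2) unfolding E2_def by auto
        have r'01: "r' \<in> {0..1}" using r' st t1 by auto
        have "\<gamma> ?l r = \<gamma> ?l r'" using sh_inj[OF gt gam_top[OF l r'01]] r r' by metis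
        then have "r = r'" using gam_inj[OF l r01 r'01] by blast
        then have "r = s" using r r' by auto
        then have "s \<in> Q" using c(3) r s t1 st unfolding Q_def by auto
        then show False using sQ by blast
      qed
    qed
    have ne1: "E1 \<inter> ?C \<noteq> {}"
    proof -
      have "sh ?q (\<gamma> ?l t) \<in> E1" unfolding E1_def using st t1 by auto
      moreover have "sh ?q (\<gamma> ?l t) \<in> ?C" using tQ unfolding Q_def by auto
      ultimately show ?thesis by blast
    qed
    have ne2: "E2 \<inter> ?C \<noteq> {}"
    proof -
      have "sh ?q (\<gamma> ?l 0) \<in> E2" unfolding E2_def using s by auto
      then show ?thesis using aC by blast
    qed
    show False using Cconn cE1 cE2 cov disj ne1 ne2 unfolding connectedin_closedin by blast
  qed
  define W where "W = {s \<in> {a..e}. F (\<gamma> i s) \<in> sh ?q ` branch \<gamma> ?l}"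
  define g where "g = (\<lambda>s. ordc \<gamma> ?l (sh (- ?q) (F (\<gamma> i s))))"
  have cFg: "continuous_map (top_of_set {a..e}) T (F \<circ> \<gamma> i)"
  proof -
    have "continuous_map (top_of_set {a..e}) T (\<gamma> i)"
      using gam_cont[OF i] continuous_map_from_subtopology[of "top_of_set {0..1}" T "\<gamma> i" "{a..e}"] ae
      by (simp add: subtopology_subtopology Int_absorb1)
    then show ?thesis using Fc continuous_map_compose by blast
  qed
  have Wcl: "closedin (top_of_set {a..e}) W"
  proof -
    have "closedin T (sh ?q ` branch \<gamma> ?l)" using sh_closed br_closed[OF l] by blast
    from closedin_continuous_map_preimage[OF cFg this] show ?thesis unfolding W_def by simp
  qed
  have Wc: "compact W" using Wcl closedin_closed_trans compact_Icc bounded_subset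
    by (metis closed_atLeastAtMost closedin_imp_subset compact_eq_bounded_closed bounded_closed_interval)
  have gc: "continuous_on W g"
  proof -
    have c1: "continuous_map (top_of_set W) (subtopology T (sh ?q ` branch \<gamma> ?l)) (F \<circ> \<gamma> i)"
      unfolding continuous_map_in_subtopology
    proof
      have "W \<subseteq> {a..e}" unfolding W_def by auto
      then show "continuous_map (top_of_set W) T (F \<circ> \<gamma> i)"
        using continuous_map_from_subtopology[OF cFg, of W] by (simp add: subtopology_subtopology Int_absorb1)
      show "F \<circ> \<gamma> i \<in> topspace (top_of_set W) \<rightarrow> sh ?q ` branch \<gamma> ?l" unfolding W_def by auto
    qed
    have c2: "continuous_map (subtopology T (sh ?q ` branch \<gamma> ?l)) (subtopology T (branch \<gamma> ?l)) (sh (- ?q))"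
      unfolding continuous_map_in_subtopology
    proof
      show "continuous_map (subtopology T (sh ?q ` branch \<gamma> ?l)) T (sh (- ?q))"
        using continuous_map_from_subtopology sh_cont by blast
      show "sh (- ?q) \<in> topspace (subtopology T (sh ?q ` branch \<gamma> ?l)) \<rightarrow> branch \<gamma> ?l"
        using sh_inv br_top[OF l] by auto
    qed
    have "continuous_map (top_of_set W) euclideanreal (ordc \<gamma> ?l \<circ> (sh (- ?q) \<circ> (F \<circ> \<gamma> i)))"
      using continuous_map_compose[OF continuous_map_compose[OF c1 c2] ordc_cont[OF l]] by (simp add: o_assoc)
    then show ?thesis unfolding g_def by (simp add: o_def)
  qed
  have QgW: "Q = g ` W"
  proof
    show "Q \<subseteq> g ` W"
    proof
      fix t assume t: "t \<in> Q"
      then obtain s where s: "s \<in> {a..e}" "sh ?q (\<gamma> ?l t) = F (\<gamma> i s)" unfolding Q_def by auto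
      have t01: "t \<in> {0..1}" using t Qsub by auto
      have sW: "s \<in> W" unfolding W_def branch_def using s t01 by (auto intro!: image_eqI[of _ _ "\<gamma> ?l t"])
      have "g s = t" unfolding g_def using s(2)[symmetric] sh_inv[OF gam_top[OF l t01]] ordc_gam[OF l t01] by simp
      then show "t \<in> g ` W" using sW by blast
    qed
  next
    show "g ` W \<subseteq> Q"
    proof
      fix t assume "t \<in> g ` W"
      then obtain s where s: "s \<in> W" "t = g s" by blast
      then obtain r where r: "r \<in> {0..1}" "F (\<gamma> i s) = sh ?q (\<gamma> ?l r)" "s \<in> {a..e}"
        unfolding W_def branch_def by auto
      have "t = r" unfolding s(2) g_def using r sh_inv[OF gam_top[OF l r(1)]] ordc_gam[OF l r(1)] by simp
      then show "t \<in> Q" unfolding Q_def using r by (auto intro!: image_eqI[of _ _ "\<gamma> i s"])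
    qed
  qed
  have Qc: "compact Q" using QgW compact_continuous_image[OF gc Wc] by simp
  obtain e' where e': "e' \<in> Q" "\<forall>t\<in>Q. t \<le> e'" using compact_attains_sup[OF Qc] Q0 by blast
  have "Q = {0..e'}"
  proof
    show "Q \<subseteq> {0..e'}" using e' Qsub by auto
    show "{0..e'} \<subseteq> Q" using down[OF e'(1)] by auto
  qed
  moreover have "0 \<le> e'" "e' \<le> 1" using e'(1) Qsub by auto
  ultimately show ?thesis unfolding Q_def by blast
qed

end

context BP begin

lemma struct:
  assumes "As \<in> seqs P"
  shows "bracket T h tau F As = {} \<or> (\<exists>i\<in>\<Lambda>. \<exists>a e b. last As = \<gamma> i ` {a..b} \<and> 0 \<le> a \<and> a \<le> e \<and> e \<le> b \<and> b \<le> 1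
            \<and> bracket T h tau F As = \<gamma> i ` {a..e})"
  using assms
proof (induction As rule: rev_induct)
  case Nil then show ?case by (simp add: seqs_def)
next
  case (snoc B xs)
  have B: "B \<in> P" using snoc.prems by (simp add: seqs_def)
  obtain j c d where j: "j \<in> \<Lambda>" "B = \<gamma> j ` {c..d}" "0 \<le> c" "c \<le> d" "d \<le> 1"
    using P_int[OF B] unfolding cinterval_def by blast
  show ?case
  proof (cases "xs = []")
    case True
    then have "bracket T h tau F (xs @ [B]) = \<gamma> j ` {c..d}" using bracket_single[OF B] j by simp
    moreover have "last (xs @ [B]) = \<gamma> j ` {c..d}" using j by simp
    ultimately show ?thesis using j by blast
  next
    case False
    have xs: "xs \<in> seqs P" using snoc.prems False by (simp add: seqs_def)
    have eq: "bracket T h tau F (xs @ [B]) = Next (bracket T h tau F xs) (last xs) B"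
      by (rule bracket_snoc[OF xs B])
    from snoc.IH[OF xs] show ?thesis
    proof
      assume "bracket T h tau F xs = {}"
      then show ?thesis using eq by (simp add: Next_def)
    next
      assume "\<exists>i\<in>\<Lambda>. \<exists>a e b. last xs = \<gamma> i ` {a..b} \<and> 0 \<le> a \<and> a \<le> e \<and> e \<le> b \<and> b \<le> 1
            \<and> bracket T h tau F xs = \<gamma> i ` {a..e}"
      then obtain i a e b where i: "i \<in> \<Lambda>" "last xs = \<gamma> i ` {a..b}" "0 \<le> a" "a \<le> e" "e \<le> b" "b \<le> 1"
        "bracket T h tau F xs = \<gamma> i ` {a..e}" by blast
      let ?A = "last xs"
      have A: "?A \<in> P" using xs False by (auto simp: seqs_def)
      obtain e' where e': "0 \<le> e'" "e' \<le> 1"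
        "{t \<in> {0..1}. sh (p ?A) (\<gamma> (lab ?A) t) \<in> F ` \<gamma> i ` {a..e}} = {0..e'}"
        using core[OF A i(1) i(2) i(3) i(4) i(5) i(6)] by blast
      have segA: "\<gamma> i ` {a..e} \<subseteq> ?A" using i by auto
      have memQ: "t \<le> e'" if "t \<in> {0..1}" "sh (p ?A) (\<gamma> (lab ?A) t) \<in> F ` \<gamma> i ` {a..e}" for t
        using that e'(3) by auto
      have NextE: "\<exists>w\<in>\<gamma> i ` {a..e}. F w = sh (p ?A) z" if "z \<in> Next (bracket T h tau F xs) ?A B" for z
        using that i(7) unfolding Next_def by blast
      show ?thesis
      proof (cases "j = lab ?A \<and> c \<le> e'")
        case True
        have "Next (bracket T h tau F xs) ?A B = \<gamma> j ` {c..min d e'}"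
        proof
          show "Next (bracket T h tau F xs) ?A B \<subseteq> \<gamma> j ` {c..min d e'}"
          proof
            fix z assume z: "z \<in> Next (bracket T h tau F xs) ?A B"
            then obtain t where t: "t \<in> {c..d}" "z = \<gamma> j t" using j unfolding Next_def by auto
            obtain w where w: "w \<in> \<gamma> i ` {a..e}" "F w = sh (p ?A) z" using NextE[OF z] by blast
            have t01: "t \<in> {0..1}" using t j by auto
            have "sh (p ?A) (\<gamma> (lab ?A) t) = F w" using w(2) t(2) True by simp
            then have "sh (p ?A) (\<gamma> (lab ?A) t) \<in> F ` \<gamma> i ` {a..e}" using w(1) by blast
            then have "t \<le> e'" using memQ[OF t01] by blast
            then show "z \<in> \<gamma> j ` {c..min d e'}" using t by auto
          qed
        next
          show "\<gamma> j ` {c..min d e'} \<subseteq> Next (bracket T h tau F xs) ?A B"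
          proof
            fix z assume "z \<in> \<gamma> j ` {c..min d e'}"
            then obtain t where t: "t \<in> {c..min d e'}" "z = \<gamma> j t" by blast
            have "t \<in> {0..e'}" using t j by auto
            then have "sh (p ?A) (\<gamma> (lab ?A) t) \<in> F ` \<gamma> i ` {a..e}" using e'(3) by blast
            then obtain w where "w \<in> \<gamma> i ` {a..e}" "F w = sh (p ?A) (\<gamma> (lab ?A) t)" by force
            then have "w \<in> \<gamma> i ` {a..e}" "F w = sh (p ?A) z" using t True by auto
            moreover have "z \<in> B" using t j by auto
            ultimately show "z \<in> Next (bracket T h tau F xs) ?A B" unfolding Next_def using i(7) by blast
          qed
        qed
        then have f: "bracket T h tau F (xs @ [B]) = \<gamma> j ` {c..min d e'}" using eq by simp
        have g: "last (xs @ [B]) = \<gamma> j ` {c..d}" "0 \<le> c" "c \<le> min d e'" "min d e' \<le> d" "d \<le> 1"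
          using j True by auto
        show ?thesis using f g j(1) by blast
      next
        case False
        have "Next (bracket T h tau F xs) ?A B = {}"
        proof (rule ccontr)
          assume "Next (bracket T h tau F xs) ?A B \<noteq> {}"
          then obtain z where z: "z \<in> Next (bracket T h tau F xs) ?A B" by blast
          then obtain t where t: "t \<in> {c..d}" "z = \<gamma> j t" using j unfolding Next_def by auto
          obtain w where w: "w \<in> \<gamma> i ` {a..e}" "F w = sh (p ?A) z" using NextE[OF z] by blast
          have t01: "t \<in> {0..1}" using t j by auto
          have "z \<in> branch \<gamma> j" using t01 t by (auto simp: branch_def)
          then have jl: "j = lab ?A" using next_lab[OF j(1) _ A _ w(2)] w segA by blast
          have "sh (p ?A) (\<gamma> (lab ?A) t) = F w" using w(2) t(2) jl by simp
          then have "sh (p ?A) (\<gamma> (lab ?A) t) \<in> F ` \<gamma> i ` {a..e}" using w(1) by blast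
          then have "t \<le> e'" using memQ[OF t01] by blast
          then show False using False jl t by auto
        qed
        then show ?thesis using eq by simp
      qed
    qed
  qed
qed

end

theorem mainTheorem11:
  fixes T :: "'a topology" and h :: "real \<Rightarrow> 'a" and tau F :: "'a \<Rightarrow> 'a"
    and \<Lambda> :: "'b set" and \<gamma> :: "'b \<Rightarrow> real \<Rightarrow> 'a"
    and P :: "'a set set" and lab :: "'a set \<Rightarrow> 'b" and p :: "'a set \<Rightarrow> int"
    and \<alpha> \<beta> :: "'a set list set" and A :: "'a set"
  assumes "lifted_graph T h tau"
    and "continuous_map T T F"
    and "degree_one T tau F"
    and "sun_like T h F \<Lambda> \<gamma>"
    and "basic_partition T h tau F \<Lambda> \<gamma> P lab p"
    and "cg_arrow T h tau F P \<alpha> \<beta>"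
    and "A \<in> P"
    and "bracket_cl T h tau F \<alpha> \<subseteq> A"
  shows "pos_covers T tau F \<Lambda> \<gamma> (bracket_cl T h tau F \<alpha>) (bracket_cl T h tau F \<beta>) 1 (p A)"
proof -
  interpret BP T h tau F \<Lambda> \<gamma> P lab p
    by (intro BP.intro SL.intro LG.intro SL_axioms.intro BP_axioms.intro) (fact assms)+
  obtain As0 A' where As0: "As0 \<in> seqs P" "A' \<in> P" "\<alpha> = cg_class T h tau F P As0"
    "\<beta> = cg_class T h tau F P (As0 @ [A'])"
    using assms(6) unfolding cg_arrow_def by blast
  have As1: "As0 @ [A'] \<in> seqs P" using As0 by (auto simp: seqs_def)
  let ?I = "bracket T h tau F As0" and ?J = "bracket T h tau F (As0 @ [A'])"
  have Ia: "bracket_cl T h tau F \<alpha> = ?I" using class_cl[OF As0(1)] As0(3) by simp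
  have Jb: "bracket_cl T h tau F \<beta> = ?J" using class_cl[OF As1] As0(4) by simp
  have Jne: "?J \<noteq> {}"
  proof -
    obtain Cs where Cs: "Cs \<in> seqs P" "\<beta> = cg_class T h tau F P Cs" "bracket T h tau F Cs \<noteq> {}"
      using assms(6) unfolding cg_arrow_def cg_vertex_def by blast
    have "Cs \<in> cg_class T h tau F P Cs" using Cs(1) by (simp add: cg_class_def)
    then have "Cs \<in> cg_class T h tau F P (As0 @ [A'])" using Cs(2) As0(4) by simp
    then show ?thesis using class_bracket Cs(3) by metis
  qed
  let ?L = "last As0"
  have L: "?L \<in> P" using As0(1) by (auto simp: seqs_def)
  have Nx: "?J = Next ?I ?L A'" by (rule bracket_snoc[OF As0(1) As0(2)])
  have Ine: "?I \<noteq> {}" using Jne Nx by (auto simp: Next_def)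
  obtain i a e b where i: "i \<in> \<Lambda>" "?L = \<gamma> i ` {a..b}" "0 \<le> a" "a \<le> e" "e \<le> b" "b \<le> 1"
        "?I = \<gamma> i ` {a..e}"
    using struct[OF As0(1)] Ine by blast
  obtain j c e2 d where j: "j \<in> \<Lambda>" "last (As0 @ [A']) = \<gamma> j ` {c..d}" "0 \<le> c" "c \<le> e2" "e2 \<le> d" "d \<le> 1"
        "?J = \<gamma> j ` {c..e2}"
    using struct[OF As1] Jne by blast
  have AL: "A = ?L"
  proof -
    obtain x where x: "x \<in> ?I" using Ine by blast
    then have "x \<in> A" using assms(8) Ia by blast
    moreover have "x \<in> ?L" using x bracket_sub_last[OF As0(1)] by blast
    ultimately show ?thesis using P_disj[OF assms(7) L] by blast
  qed
  let ?l = "lab A" and ?q = "p A"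
  have l: "?l \<in> \<Lambda>" using P_map[OF assms(7)] by blast
  obtain e' where e': "0 \<le> e'" "e' \<le> 1"
    "{t \<in> {0..1}. sh ?q (\<gamma> ?l t) \<in> F ` \<gamma> i ` {a..e}} = {0..e'}"
    using core[OF assms(7) i(1) _ i(3) i(4) i(5) i(6)] i(2) AL by blast
  have NextE: "\<exists>w\<in>\<gamma> i ` {a..e}. F w = sh ?q z" if "z \<in> ?J" for z
    using that Nx i(7) AL unfolding Next_def by blast
  have JA': "?J \<subseteq> A'" using Nx unfolding Next_def by blast
  have jl: "j = ?l"
  proof -
    obtain z where z: "z \<in> ?J" using Jne by blast
    obtain w where w: "w \<in> \<gamma> i ` {a..e}" "F w = sh ?q z" using NextE[OF z] by blast
    have "w \<in> A" using w(1) i AL by auto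
    moreover have "z \<in> branch \<gamma> j" using z j by (auto simp: branch_def)
    ultimately show ?thesis using next_lab[OF j(1) _ assms(7) _ w(2)] by blast
  qed
  have "e' \<in> {0..e'}" using e' by simp
  then have "e' \<in> {t \<in> {0..1}. sh ?q (\<gamma> ?l t) \<in> F ` \<gamma> i ` {a..e}}" using e'(3) by simp
  then have "sh ?q (\<gamma> ?l e') \<in> F ` \<gamma> i ` {a..e}" by blast
  then obtain s where s: "s \<in> {a..e}" "F (\<gamma> i s) = sh ?q (\<gamma> ?l e')" by (metis imageE)
  have Abr: "A \<subseteq> branch \<gamma> i" using AL i by (auto simp: branch_def)
  have ab: "a \<le> b" using i(4) i(5) by linarith
  have bm: "bmin \<gamma> i A = \<gamma> i a" using bmin_seg[OF i(1) i(3) ab i(6)] i(2) AL by simp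
  have "F (bmin \<gamma> i A) = sh ?q (\<gamma> ?l 0)" using P_map[OF assms(7)] i(1) Abr by blast
  then have Fa: "F (\<gamma> i a) = sh ?q (\<gamma> ?l 0)" using bm by simp
  have a01: "a \<in> {0..1}" and s01: "s \<in> {a..e}" "s \<in> {0..1}" using i s by auto
  have g0t: "\<gamma> ?l 0 \<in> topspace T" using gam_top[OF l] by simp
  have get: "\<gamma> ?l e' \<in> topspace T" using gam_top[OF l] e' by simp
  have x1: "ordc \<gamma> j (retrb \<gamma> j (sh (- ?q) ((F ^^ 1) (\<gamma> i a)))) = 0"
  proof -
    have "sh (- ?q) ((F ^^ 1) (\<gamma> i a)) = \<gamma> j 0" using Fa sh_inv[OF g0t] jl by simp
    moreover have "\<gamma> j 0 \<in> branch \<gamma> j" by (auto simp: branch_def)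
    ultimately show ?thesis using ordc_gam[OF j(1)] by (simp add: retrb_def)
  qed
  have y1: "ordc \<gamma> j (retrb \<gamma> j (sh (- ?q) ((F ^^ 1) (\<gamma> i s)))) = e'"
  proof -
    have "sh (- ?q) ((F ^^ 1) (\<gamma> i s)) = \<gamma> j e'" using s(2) sh_inv[OF get] jl by simp
    moreover have "\<gamma> j e' \<in> branch \<gamma> j" using e' by (auto simp: branch_def)
    ultimately show ?thesis using ordc_gam[OF j(1)] e' by (simp add: retrb_def)
  qed
  have e21: "e2 \<le> 1" using j(5) j(6) by linarith
  have c01: "c \<in> {0..1}" using j(3) j(4) e21 by simp
  have "bmin \<gamma> j ?J = \<gamma> j c" using bmin_seg[OF j(1) j(3) j(4) e21] j(7) by simp
  then have bmJ: "ordc \<gamma> j (bmin \<gamma> j ?J) = c" using ordc_gam[OF j(1) c01] by simp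
  have zJ: "ordc \<gamma> j z \<le> e'" if z: "z \<in> ?J" for z
  proof -
    obtain t where t: "t \<in> {c..e2}" "z = \<gamma> j t" using z j(7) by blast
    have t01: "t \<in> {0..1}" using t j by auto
    obtain w where w: "w \<in> \<gamma> i ` {a..e}" "F w = sh ?q z" using NextE[OF z] by blast
    have "sh ?q (\<gamma> ?l t) \<in> F ` \<gamma> i ` {a..e}" using w t jl by (metis image_eqI)
    then have "t \<in> {0..e'}" using e'(3) t01 by blast
    then show ?thesis using t ordc_gam[OF j(1) t01] by simp
  qed
  have e1: "e \<le> 1" using i(5) i(6) by linarith
  have cI: "cinterval \<gamma> i ?I" unfolding cinterval_def
    by (intro exI[of _ a] exI[of _ e]) (use i e1 in simp)
  have cJ: "cinterval \<gamma> j ?J" unfolding cinterval_def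
    by (intro exI[of _ c] exI[of _ e2]) (use j e21 in simp)
  have ex: "\<exists>x\<in>?I. \<exists>y\<in>?I. ordc \<gamma> i x \<le> ordc \<gamma> i y \<and>
            ordc \<gamma> j (retrb \<gamma> j (shift T tau (- ?q) ((F ^^ 1) x))) \<le> ordc \<gamma> j (bmin \<gamma> j ?J) \<and>
            (\<forall>z\<in>?J. ordc \<gamma> j z \<le> ordc \<gamma> j (retrb \<gamma> j (shift T tau (- ?q) ((F ^^ 1) y))))"
  proof (rule bexI[where x="\<gamma> i a"], rule bexI[where x="\<gamma> i s"], intro conjI ballI)
    show "\<gamma> i a \<in> ?I" using i by auto
    show "\<gamma> i s \<in> ?I" using i s by auto
    show "ordc \<gamma> i (\<gamma> i a) \<le> ordc \<gamma> i (\<gamma> i s)" using ordc_gam[OF i(1) a01] ordc_gam[OF i(1) s01(2)] s by simp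
    show "ordc \<gamma> j (retrb \<gamma> j (shift T tau (- ?q) ((F ^^ 1) (\<gamma> i a)))) \<le> ordc \<gamma> j (bmin \<gamma> j ?J)"
      using x1 bmJ j by simp
    fix z assume "z \<in> ?J"
    then show "ordc \<gamma> j z \<le> ordc \<gamma> j (retrb \<gamma> j (shift T tau (- ?q) ((F ^^ 1) (\<gamma> i s))))"
      using zJ y1 by simp
  qed
  show ?thesis unfolding pos_covers_def Ia Jb using i(1) j(1) cI cJ ex by blast
qed

end
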